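(* Let $\mathcal N$ be an occurrence net and $x$ a place of $\mathcal N$. Then the last known cut $\mathit{LKC}(x)=\{p\in\mathcal P\mid p\not<x\ \text{and}\ t<x\text{ for all }t\in{}^\bullet p\}$ is a cut of $\mathcal N$.
   Context: A Petri net $(\mathcal P,\mathcal T,\mathcal F,\mathit{In})$ has disjoint places $\mathcal P$ and transitions $\mathcal T$, a flow relation $\mathcal F$ that is a multiset over $(\mathcal P\times\mathcal T)\cup(\mathcal T\times\mathcal P)$, and a finite multiset $\mathit{In}$ over $\mathcal P$; ${}^\bullet x(y)=\mathcal F(y,x)$, $x^\bullet(y)=\mathcal F(x,y)$, and every transition has finite nonempty pre- and postcondition. Let $<$ be the transitive closure of $\{(x,y)\mid\mathcal F(x,y)>0\}$ and $\le$ its reflexive-transitive closure. Nodes $x,y$ are in conflict if there is a place $p\ne x,y$ and distinct transitions $t_1,t_2\in p^\bullet$ with $t_1\le x$ and $t_2\le y$; they are concurrent if neither $x\le y$ nor $y\le x$ nor in conflict. An occurrence net is a Petri net in which pre- and postconditions of transitions are sets, every place has at most one incoming transition, $\mathit{In}=\{p\mid{}^\bullet p=\emptyset\}$, $\mathcal F^{-1}$ is well-founded, and no transition is in conflict with itself. A cut is a maximal set of pairwise concurrent places. *)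

theory Defs
  imports Main
begin

text \<open>A Petri net is given by a place set P, a transition set T (nodes of a common
type 'a), a flow multiset F (a function from pairs of nodes to nat) and an
initial multiset In over places (a function to nat).\<close>

definition preset :: "('a \<times> 'a \<Rightarrow> nat) \<Rightarrow> 'a \<Rightarrow> 'a set" where
  "preset F x = {y. F (y, x) > 0}"

definition postset :: "('a \<times> 'a \<Rightarrow> nat) \<Rightarrow> 'a \<Rightarrow> 'a set" where
  "postset F x = {y. F (x, y) > 0}"

definition petri_net :: "'a set \<Rightarrow> 'a set \<Rightarrow> ('a \<times> 'a \<Rightarrow> nat) \<Rightarrow> ('a \<Rightarrow> nat) \<Rightarrow> bool" where
  "petri_net P T F In \<longleftrightarrow>
     P \<inter> T = {} \<and>
     (\<forall>x y. F (x, y) > 0 \<longrightarrow> (x \<in> P \<and> y \<in> T) \<or> (x \<in> T \<and> y \<in> P)) \<and>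
     finite {p. In p > 0} \<and> (\<forall>p. In p > 0 \<longrightarrow> p \<in> P) \<and>
     (\<forall>t\<in>T. finite (preset F t) \<and> preset F t \<noteq> {} \<and>
              finite (postset F t) \<and> postset F t \<noteq> {})"

definition flow_rel :: "('a \<times> 'a \<Rightarrow> nat) \<Rightarrow> ('a \<times> 'a) set" where
  "flow_rel F = {(x, y). F (x, y) > 0}"

definition causal_less :: "('a \<times> 'a \<Rightarrow> nat) \<Rightarrow> 'a \<Rightarrow> 'a \<Rightarrow> bool" where
  "causal_less F x y \<longleftrightarrow> (x, y) \<in> (flow_rel F)\<^sup>+"

definition causal_le :: "('a \<times> 'a \<Rightarrow> nat) \<Rightarrow> 'a \<Rightarrow> 'a \<Rightarrow> bool" where
  "causal_le F x y \<longleftrightarrow> (x, y) \<in> (flow_rel F)\<^sup>*"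

definition in_conflict :: "'a set \<Rightarrow> ('a \<times> 'a \<Rightarrow> nat) \<Rightarrow> 'a \<Rightarrow> 'a \<Rightarrow> bool" where
  "in_conflict P F x y \<longleftrightarrow>
     (\<exists>p\<in>P. p \<noteq> x \<and> p \<noteq> y \<and>
        (\<exists>t1 t2. t1 \<in> postset F p \<and> t2 \<in> postset F p \<and> t1 \<noteq> t2 \<and>
                 causal_le F t1 x \<and> causal_le F t2 y))"

definition concurrent :: "'a set \<Rightarrow> ('a \<times> 'a \<Rightarrow> nat) \<Rightarrow> 'a \<Rightarrow> 'a \<Rightarrow> bool" where
  "concurrent P F x y \<longleftrightarrow>
     \<not> causal_le F x y \<and> \<not> causal_le F y x \<and> \<not> in_conflict P F x y"

definition occurrence_net :: "'a set \<Rightarrow> 'a set \<Rightarrow> ('a \<times> 'a \<Rightarrow> nat) \<Rightarrow> ('a \<Rightarrow> nat) \<Rightarrow> bool" where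
  "occurrence_net P T F In \<longleftrightarrow>
     petri_net P T F In \<and>
     (\<forall>t\<in>T. \<forall>p. F (p, t) \<le> 1 \<and> F (t, p) \<le> 1) \<and>
     (\<forall>p\<in>P. \<forall>t1 t2. t1 \<in> preset F p \<and> t2 \<in> preset F p \<longrightarrow> t1 = t2) \<and>
     (\<forall>p. In p = (if p \<in> P \<and> preset F p = {} then 1 else 0)) \<and>
     wf (flow_rel F) \<and>
     (\<forall>t\<in>T. \<not> in_conflict P F t t)"

definition pw_concurrent :: "'a set \<Rightarrow> ('a \<times> 'a \<Rightarrow> nat) \<Rightarrow> 'a set \<Rightarrow> bool" where
  "pw_concurrent P F S \<longleftrightarrow> S \<subseteq> P \<and> (\<forall>x\<in>S. \<forall>y\<in>S. x \<noteq> y \<longrightarrow> concurrent P F x y)"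

definition is_cut :: "'a set \<Rightarrow> ('a \<times> 'a \<Rightarrow> nat) \<Rightarrow> 'a set \<Rightarrow> bool" where
  "is_cut P F S \<longleftrightarrow> pw_concurrent P F S \<and>
     (\<forall>S'. S \<subseteq> S' \<and> pw_concurrent P F S' \<longrightarrow> S' = S)"

definition LKC :: "'a set \<Rightarrow> ('a \<times> 'a \<Rightarrow> nat) \<Rightarrow> 'a \<Rightarrow> 'a set" where
  "LKC P F x = {p \<in> P. \<not> causal_less F p x \<and> (\<forall>t \<in> preset F p. causal_less F t x)}"

end

theory Submission
  imports Defs
begin

theorem mainTheorem16:
  assumes "occurrence_net P T F In"
    and "x \<in> P"
  shows "is_cut P F (LKC P F x)"
proof -
  define R where "R = flow_rel F"
  have xP: "x \<in> P" using assms(2) .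
  from assms(1) have pn: "petri_net P T F In"
    and uniq: "\<forall>p\<in>P. \<forall>t1 t2. t1 \<in> preset F p \<and> t2 \<in> preset F p \<longrightarrow> t1 = t2"
    and wfR: "wf R" and nc: "\<forall>t\<in>T. \<not> in_conflict P F t t"
    unfolding occurrence_net_def R_def by auto
  have disj: "P \<inter> T = {}" and ftyp: "\<And>a b. (a,b) \<in> R \<Longrightarrow> (a \<in> P \<and> b \<in> T) \<or> (a \<in> T \<and> b \<in> P)"
    and tpre: "\<And>t. t \<in> T \<Longrightarrow> preset F t \<noteq> {}"
    using pn unfolding petri_net_def flow_rel_def R_def by auto
  have acyc: "\<And>a. (a,a) \<notin> R\<^sup>+" using wf_acyclic[OF wfR] unfolding acyclic_def by blast
  have ltd: "\<And>a b. causal_less F a b \<longleftrightarrow> (a,b) \<in> R\<^sup>+" by (simp add: causal_less_def R_def)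
  have led: "\<And>a b. causal_le F a b \<longleftrightarrow> (a,b) \<in> R\<^sup>*" by (simp add: causal_le_def R_def)
  have pre: "\<And>a b. a \<in> preset F b \<longleftrightarrow> (a,b) \<in> R" by (simp add: preset_def flow_rel_def R_def)
  have post: "\<And>a b. a \<in> postset F b \<longleftrightarrow> (b,a) \<in> R" by (simp add: postset_def flow_rel_def R_def)
  have LKCd: "\<And>p. p \<in> LKC P F x \<longleftrightarrow> p \<in> P \<and> (p,x) \<notin> R\<^sup>+ \<and> (\<forall>t. (t,p) \<in> R \<longrightarrow> (t,x) \<in> R\<^sup>+)"
    unfolding LKC_def ltd using pre by auto
  have confd: "\<And>a b. in_conflict P F a b \<longleftrightarrow> (\<exists>r\<in>P. r \<noteq> a \<and> r \<noteq> b \<and>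
        (\<exists>t1 t2. (r,t1) \<in> R \<and> (r,t2) \<in> R \<and> t1 \<noteq> t2 \<and> (t1,a) \<in> R\<^sup>* \<and> (t2,b) \<in> R\<^sup>*))"
    unfolding in_conflict_def post led by auto
  have A: "\<And>a b. b \<in> LKC P F x \<Longrightarrow> (a,b) \<in> R\<^sup>+ \<Longrightarrow> (a,x) \<in> R\<^sup>+"
  proof -
    fix a b assume b: "b \<in> LKC P F x" and ab: "(a,b) \<in> R\<^sup>+"
    from tranclD2[OF ab] obtain c where "(a,c) \<in> R\<^sup>*" "(c,b) \<in> R" by blast
    moreover have "(c,x) \<in> R\<^sup>+" using b \<open>(c,b) \<in> R\<close> LKCd by blast
    ultimately show "(a,x) \<in> R\<^sup>+" by (meson rtrancl_trancl_trancl)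
  qed
  have xL: "x \<in> LKC P F x" using LKCd xP acyc by blast
  have TtoP: "\<And>t. t \<in> T \<Longrightarrow> t \<notin> P" using disj by blast
  have pw: "pw_concurrent P F (LKC P F x)"
    unfolding pw_concurrent_def
  proof (intro conjI ballI impI)
    show "LKC P F x \<subseteq> P" using LKCd by blast
    fix p q assume p: "p \<in> LKC P F x" and q: "q \<in> LKC P F x" and pq: "p \<noteq> q"
    have nle: "(a,b) \<notin> R\<^sup>*" if "a \<in> LKC P F x" "b \<in> LKC P F x" "a \<noteq> b" for a b
    proof
      assume "(a,b) \<in> R\<^sup>*"
      then have "(a,b) \<in> R\<^sup>+" using that rtrancl_eq_or_trancl by metis
      then have "(a,x) \<in> R\<^sup>+" using A that by blast
      then show False using that LKCd by blast
    qed
    have nconf: "\<not> in_conflict P F p q"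
    proof
      assume "in_conflict P F p q"
      then obtain r t1 t2 where r: "r \<in> P" "(r,t1) \<in> R" "(r,t2) \<in> R" "t1 \<noteq> t2"
        "(t1,p) \<in> R\<^sup>*" "(t2,q) \<in> R\<^sup>*" unfolding confd by blast
      have t1T: "t1 \<in> T" using ftyp[OF r(2)] r(1) disj by blast
      have t2T: "t2 \<in> T" using ftyp[OF r(3)] r(1) disj by blast
      have pP: "p \<in> P" "q \<in> P" using p q LKCd by auto
      have "(t1,p) \<in> R\<^sup>+" using r(5) t1T pP TtoP rtrancl_eq_or_trancl by metis
      then have x1: "(t1,x) \<in> R\<^sup>+" using A p by blast
      have "(t2,q) \<in> R\<^sup>+" using r(6) t2T pP TtoP rtrancl_eq_or_trancl by metis
      then have x2: "(t2,x) \<in> R\<^sup>+" using A q by blast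
      from tranclD2[OF x1] obtain c1 where c1: "(t1,c1) \<in> R\<^sup>*" "(c1,x) \<in> R" by blast
      from tranclD2[OF x2] obtain c2 where c2: "(t2,c2) \<in> R\<^sup>*" "(c2,x) \<in> R" by blast
      have "c1 = c2" using uniq xP c1(2) c2(2) pre by blast
      have c1T: "c1 \<in> T" using ftyp[OF c1(2)] xP disj by blast
      have "in_conflict P F c1 c1" unfolding confd
        using r c1 c2 \<open>c1 = c2\<close> c1T TtoP by metis
      then show False using nc c1T by blast
    qed
    show "concurrent P F p q" unfolding concurrent_def led
      using nle p q pq nconf by blast
  qed
  have claim: "\<And>q. q \<in> P \<Longrightarrow> (q,x) \<notin> R\<^sup>+ \<Longrightarrow> (\<exists>p\<in>LKC P F x. (p,q) \<in> R\<^sup>*) \<or> in_conflict P F q x"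
  proof -
    fix q0 show "q0 \<in> P \<Longrightarrow> (q0,x) \<notin> R\<^sup>+ \<Longrightarrow> (\<exists>p\<in>LKC P F x. (p,q0) \<in> R\<^sup>*) \<or> in_conflict P F q0 x"
    proof (induction q0 rule: wf_induct_rule[OF wf_trancl[OF wfR], case_names less])
      case (less q)
      show ?case
      proof (cases "q \<in> LKC P F x")
        case True then show ?thesis by blast
      next
        case False
        then obtain t where t: "(t,q) \<in> R" "(t,x) \<notin> R\<^sup>+" using less.prems LKCd by blast
        have tT: "t \<in> T" using ftyp[OF t(1)] less.prems disj by blast
        show ?thesis
        proof (cases "\<exists>p. (p,t) \<in> R \<and> (p,x) \<notin> R\<^sup>+")
          case True
          then obtain p where p: "(p,t) \<in> R" "(p,x) \<notin> R\<^sup>+" by blast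
          have pP: "p \<in> P" using ftyp[OF p(1)] tT disj by blast
          have pq: "(p,q) \<in> R\<^sup>+" using p(1) t(1) by auto
          from less.IH[OF pq pP p(2)] show ?thesis
          proof
            assume "\<exists>p'\<in>LKC P F x. (p',p) \<in> R\<^sup>*"
            then show ?thesis using pq by (meson trancl_into_rtrancl rtrancl_trans)
          next
            assume "in_conflict P F p x"
            then obtain r t1 t2 where r: "r \<in> P" "r \<noteq> p" "r \<noteq> x" "(r,t1) \<in> R" "(r,t2) \<in> R" "t1 \<noteq> t2"
              "(t1,p) \<in> R\<^sup>*" "(t2,x) \<in> R\<^sup>*" unfolding confd by blast
            have t1q: "(t1,q) \<in> R\<^sup>*" using r(7) pq by (meson trancl_into_rtrancl rtrancl_trans)
            have "r \<noteq> q"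
            proof
              assume "r = q"
              then have "(q,q) \<in> R\<^sup>+" using r(4) t1q by (meson rtrancl_into_trancl2)
              then show False using acyc by blast
            qed
            then show ?thesis unfolding confd using r t1q by blast
          qed
        next
          case False
          obtain p where p: "(p,t) \<in> R" using tpre[OF tT] pre by blast
          have px: "(p,x) \<in> R\<^sup>+" using False p by blast
          have pP: "p \<in> P" using ftyp[OF p(1)] tT disj by blast
          from tranclD[OF px] obtain c where c: "(p,c) \<in> R" "(c,x) \<in> R\<^sup>*" by blast
          have "c \<noteq> t"
          proof
            assume "c = t"
            then have "t = x \<or> (t,x) \<in> R\<^sup>+" using c(2) rtrancl_eq_or_trancl by metis
            then show False using t(2) tT xP TtoP by blast
          qed
          have pq: "(p,q) \<in> R\<^sup>+" using p t(1) by auto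
          have "p \<noteq> q" using pq acyc by blast
          moreover have "p \<noteq> x" using px acyc by blast
          ultimately show ?thesis unfolding confd
            using pP p c \<open>c \<noteq> t\<close> t(1) by blast
        qed
      qed
    qed
  qed
  show ?thesis unfolding is_cut_def
  proof (intro conjI allI impI)
    show "pw_concurrent P F (LKC P F x)" by (rule pw)
    fix S' assume S': "LKC P F x \<subseteq> S' \<and> pw_concurrent P F S'"
    have "S' \<subseteq> LKC P F x"
    proof
      fix q assume qS: "q \<in> S'"
      show "q \<in> LKC P F x"
      proof (rule ccontr)
        assume qn: "q \<notin> LKC P F x"
        have qP: "q \<in> P" using S' qS unfolding pw_concurrent_def by blast
        have cc: "\<And>a b. a \<in> S' \<Longrightarrow> b \<in> S' \<Longrightarrow> a \<noteq> b \<Longrightarrow> concurrent P F a b"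
          using S' unfolding pw_concurrent_def by blast
        have "q \<noteq> x" using qn xL by blast
        have xS: "x \<in> S'" using xL S' by blast
        show False
        proof (cases "(q,x) \<in> R\<^sup>+")
          case True
          then show False using cc[OF qS xS \<open>q \<noteq> x\<close>] unfolding concurrent_def led
            by (meson trancl_into_rtrancl)
        next
          case False
          from claim[OF qP False] show False
          proof
            assume "\<exists>p\<in>LKC P F x. (p,q) \<in> R\<^sup>*"
            then obtain p where "p \<in> LKC P F x" "(p,q) \<in> R\<^sup>*" by blast
            moreover have "p \<noteq> q" using qn \<open>p \<in> LKC P F x\<close> by blast
            ultimately show False using cc[of p q] S' qS unfolding concurrent_def led by blast
          next
            assume "in_conflict P F q x"
            then show False using cc[OF qS xS \<open>q \<noteq> x\<close>] unfolding concurrent_def by blast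
          qed
        qed
      qed
    qed
    then show "S' = LKC P F x" using S' by blast
  qed
qed

end
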